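(* Let $\mathfrak g$ be a unimodular almost abelian Lie algebra with a Hermitian structure $(J,g)$, and let $e$ be an admissible frame with data $\lambda,v,A$ (so $\lambda+\operatorname{tr}A+\overline{\operatorname{tr}A}=0$). Then: (1) $s=-\lambda^2\le0$, and $s=0\iff Ric^{(1)}=0\iff\lambda=0$; (2) $\hat s=-2\lambda^2-|v|^2\le0$, and $\hat s=0\iff Ric^{(3)}=0\iff\lambda=0,\ v=0$; (3) $Ric^{(2)}=0\iff R=0\iff \lambda=0,\ v=0,\ [A,A^\ast]=0$.
   Context: Setup: Hermitian structure $(J,g)$ on a real Lie algebra $\mathfrak g$ of dimension $2n$ ($J$ integrable, $g$ a $J$-invariant inner product), viewed as left-invariant on the Lie group. $\mathfrak g^{1,0}=\{x-\sqrt{-1}Jx\}$, unitary frame $e_1,\dots,e_n$ of $\mathfrak g^{1,0}$ ($g(e_i,\bar e_j)=\delta_{ij}$, $g$ extended bilinearly), dual coframe $\varphi_i$, $d$ the Chevalley–Eilenberg differential. $\mathfrak g$ is unimodular if $\operatorname{tr}\mathrm{ad}_x=0$ for all $x$; almost abelian if non-abelian with an abelian ideal of codimension one. An admissible frame is a unitary frame with $d\varphi_1=-\lambda\,\varphi_1\wedge\bar\varphi_1$, $d\varphi_i=-\bar v_i\,\varphi_1\wedge\bar\varphi_1+\sum_{j=2}^n\overline{A_{ij}}(\varphi_1+\bar\varphi_1)\wedge\varphi_j$, $\lambda\in\mathbb R$, $v\in\mathbb C^{n-1}$, $A\in M_{n-1}(\mathbb C)$. $R$ denotes the curvature of the Chern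 connection (the unique connection preserving $J,g$ with torsion of vanishing $(1,1)$-part), $R_{i\bar jk\bar\ell}=g(R(e_i,\bar e_j)e_k,\bar e_\ell)$. Chern Ricci curvatures: $Ric^{(1)}_{i\bar j}=\sum_rR_{i\bar jr\bar r}$, $Ric^{(2)}_{i\bar j}=\sum_rR_{r\bar ri\bar j}$, $Ric^{(3)}_{i\bar j}=\sum_rR_{r\bar ji\bar r}$; Chern scalar curvature $s=\sum_iRic^{(1)}_{i\bar i}$; altered scalar curvature $\hat s=\sum_iRic^{(3)}_{i\bar i}$. *)

theory Defs
  imports Complex_Main
begin

(* Model: complexified Lie algebra g^C of a 2n-dim real Lie algebra with Hermitian
   structure, written in a unitary frame.  Basis index (k, False) = e_k,
   (k, True) = conj e_k, for k in {1..n}. *)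

type_synonym idx = "nat \<times> bool"
type_synonym sconst = "idx \<Rightarrow> idx \<Rightarrow> idx \<Rightarrow> complex"

definition Bn :: "nat \<Rightarrow> idx set" where
  "Bn n = {1..n} \<times> (UNIV :: bool set)"

definition cb :: "idx \<Rightarrow> idx" where
  "cb p = (fst p, \<not> snd p)"

(* c p q r = coefficient of basis vector r in [p, q] *)
definition bracket :: "nat \<Rightarrow> sconst \<Rightarrow> (idx \<Rightarrow> complex) \<Rightarrow> (idx \<Rightarrow> complex) \<Rightarrow> idx \<Rightarrow> complex" where
  "bracket n c x y = (\<lambda>r. \<Sum>p\<in>Bn n. \<Sum>q\<in>Bn n. x p * y q * c p q r)"

definition basisv :: "idx \<Rightarrow> idx \<Rightarrow> complex" where
  "basisv p = (\<lambda>q. if q = p then 1 else 0)"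

(* real vectors of g^C, i.e. the real Lie algebra g *)
definition realvec :: "nat \<Rightarrow> (idx \<Rightarrow> complex) \<Rightarrow> bool" where
  "realvec n x = (\<forall>p\<in>Bn n. x (cb p) = cnj (x p))"

(* J acts by i on e_k and by -i on conj e_k *)
definition Jev :: "idx \<Rightarrow> complex" where
  "Jev p = (if snd p then - \<i> else \<i>)"

(* g extended complex-bilinearly: g(e_i, conj e_j) = delta_ij, g(e_i,e_j) = 0 *)
definition gmet :: "idx \<Rightarrow> idx \<Rightarrow> complex" where
  "gmet p q = (if fst p = fst q \<and> snd p \<noteq> snd q then 1 else 0)"

(* (c defines the complexification of a real Lie algebra) and J is integrable *)
definition hermitian_lie :: "nat \<Rightarrow> sconst \<Rightarrow> bool" where
  "hermitian_lie n c \<longleftrightarrow>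
     (\<forall>p\<in>Bn n. \<forall>q\<in>Bn n. \<forall>r\<in>Bn n. c p q r = - c q p r) \<and>
     (\<forall>p\<in>Bn n. \<forall>q\<in>Bn n. \<forall>s\<in>Bn n. \<forall>t\<in>Bn n.
        (\<Sum>r\<in>Bn n. c q s r * c p r t + c s p r * c q r t + c p q r * c s r t) = 0) \<and>
     (\<forall>p\<in>Bn n. \<forall>q\<in>Bn n. \<forall>r\<in>Bn n. c (cb p) (cb q) (cb r) = cnj (c p q r)) \<and>
     (\<forall>i\<in>{1..n}. \<forall>j\<in>{1..n}. \<forall>k\<in>{1..n}. c (i, False) (j, False) (k, True) = 0)"

definition tr_ad :: "nat \<Rightarrow> sconst \<Rightarrow> (idx \<Rightarrow> complex) \<Rightarrow> complex" where
  "tr_ad n c x = (\<Sum>q\<in>Bn n. bracket n c x (basisv q) q)"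

definition unimodular :: "nat \<Rightarrow> sconst \<Rightarrow> bool" where
  "unimodular n c \<longleftrightarrow> (\<forall>x. realvec n x \<longrightarrow> tr_ad n c x = 0)"

definition pairing :: "nat \<Rightarrow> (idx \<Rightarrow> complex) \<Rightarrow> (idx \<Rightarrow> complex) \<Rightarrow> complex" where
  "pairing n a x = (\<Sum>p\<in>Bn n. a p * x p)"

definition abelian :: "nat \<Rightarrow> sconst \<Rightarrow> bool" where
  "abelian n c \<longleftrightarrow> (\<forall>x y. realvec n x \<longrightarrow> realvec n y \<longrightarrow> (\<forall>r\<in>Bn n. bracket n c x y r = 0))"

(* non-abelian, and there is an abelian ideal h of codimension one in g;
   h = kernel (on real vectors) of a nonzero real linear functional a *)
definition almost_abelian :: "nat \<Rightarrow> sconst \<Rightarrow> bool" where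
  "almost_abelian n c \<longleftrightarrow> \<not> abelian n c \<and>
     (\<exists>a. (\<forall>p\<in>Bn n. a (cb p) = cnj (a p)) \<and> (\<exists>p\<in>Bn n. a p \<noteq> 0) \<and>
        (\<forall>x y. realvec n x \<longrightarrow> realvec n y \<longrightarrow> pairing n a x = 0 \<longrightarrow>
            pairing n a (bracket n c x y) = 0 \<and>
            (pairing n a y = 0 \<longrightarrow> (\<forall>r\<in>Bn n. bracket n c x y r = 0))))"

(* coframe phi_k, conj phi_k, as coefficient functions of 1-forms *)
definition phi :: "nat \<Rightarrow> idx \<Rightarrow> complex" where
  "phi k = (\<lambda>p. if p = (k, False) then 1 else 0)"

definition phibar :: "nat \<Rightarrow> idx \<Rightarrow> complex" where
  "phibar k = (\<lambda>p. if p = (k, True) then 1 else 0)"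

(* Chevalley-Eilenberg differential of a 1-form: d alpha (x,y) = - alpha([x,y]),
   evaluated on basis vectors *)
definition dform :: "nat \<Rightarrow> sconst \<Rightarrow> (idx \<Rightarrow> complex) \<Rightarrow> idx \<Rightarrow> idx \<Rightarrow> complex" where
  "dform n c \<alpha> p q = - (\<Sum>r\<in>Bn n. \<alpha> r * c p q r)"

definition wedge :: "(idx \<Rightarrow> complex) \<Rightarrow> (idx \<Rightarrow> complex) \<Rightarrow> idx \<Rightarrow> idx \<Rightarrow> complex" where
  "wedge \<alpha> \<beta> p q = \<alpha> p * \<beta> q - \<alpha> q * \<beta> p"

definition admissible :: "nat \<Rightarrow> sconst \<Rightarrow> real \<Rightarrow> (nat \<Rightarrow> complex) \<Rightarrow> (nat \<Rightarrow> nat \<Rightarrow> complex) \<Rightarrow> bool" where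
  "admissible n c lam v A \<longleftrightarrow>
     (\<forall>p\<in>Bn n. \<forall>q\<in>Bn n.
        dform n c (phi 1) p q = - complex_of_real lam * wedge (phi 1) (phibar 1) p q \<and>
        (\<forall>i\<in>{2..n}. dform n c (phi i) p q =
            - cnj (v i) * wedge (phi 1) (phibar 1) p q
            + (\<Sum>j=2..n. cnj (A i j) * wedge (\<lambda>r. phi 1 r + phibar 1 r) (phi j) p q)))"

(* left-invariant connection, complex-bilinearly extended:
   nabla_{p} q = sum_r G p q r * (basis r).  Chern connection conditions. *)
definition is_chern :: "nat \<Rightarrow> sconst \<Rightarrow> sconst \<Rightarrow> bool" where
  "is_chern n c G \<longleftrightarrow>
     (\<forall>p q r. \<not> (p \<in> Bn n \<and> q \<in> Bn n \<and> r \<in> Bn n) \<longrightarrow> G p q r = 0) \<and>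
     (\<forall>p\<in>Bn n. \<forall>q\<in>Bn n. \<forall>r\<in>Bn n. G (cb p) (cb q) (cb r) = cnj (G p q r)) \<and>
     (\<forall>p\<in>Bn n. \<forall>q\<in>Bn n. \<forall>r\<in>Bn n. Jev q * G p q r = Jev r * G p q r) \<and>
     (\<forall>p\<in>Bn n. \<forall>q\<in>Bn n. \<forall>s\<in>Bn n.
        (\<Sum>r\<in>Bn n. G p q r * gmet r s) + (\<Sum>r\<in>Bn n. gmet q r * G p s r) = 0) \<and>
     (\<forall>i\<in>{1..n}. \<forall>j\<in>{1..n}. \<forall>r\<in>Bn n.
        G (i, False) (j, True) r - G (j, True) (i, False) r - c (i, False) (j, True) r = 0)"

definition chern :: "nat \<Rightarrow> sconst \<Rightarrow> sconst" where
  "chern n c = (THE G. is_chern n c G)"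

(* R(p,q)s = nabla_p nabla_q s - nabla_q nabla_p s - nabla_[p,q] s, component r *)
definition curv :: "nat \<Rightarrow> sconst \<Rightarrow> idx \<Rightarrow> idx \<Rightarrow> idx \<Rightarrow> idx \<Rightarrow> complex" where
  "curv n c p q s r = (let G = chern n c in
     \<Sum>t\<in>Bn n. G q s t * G p t r - G p s t * G q t r - c p q t * G t s r)"

(* R_{i jbar k lbar} = g(R(e_i, conj e_j) e_k, conj e_l) *)
definition Rcomp :: "nat \<Rightarrow> sconst \<Rightarrow> nat \<Rightarrow> nat \<Rightarrow> nat \<Rightarrow> nat \<Rightarrow> complex" where
  "Rcomp n c i j k l = (\<Sum>r\<in>Bn n. curv n c (i, False) (j, True) (k, False) r * gmet r (l, True))"

definition Ric1 :: "nat \<Rightarrow> sconst \<Rightarrow> nat \<Rightarrow> nat \<Rightarrow> complex" where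
  "Ric1 n c i j = (\<Sum>r=1..n. Rcomp n c i j r r)"

definition Ric2 :: "nat \<Rightarrow> sconst \<Rightarrow> nat \<Rightarrow> nat \<Rightarrow> complex" where
  "Ric2 n c i j = (\<Sum>r=1..n. Rcomp n c r r i j)"

definition Ric3 :: "nat \<Rightarrow> sconst \<Rightarrow> nat \<Rightarrow> nat \<Rightarrow> complex" where
  "Ric3 n c i j = (\<Sum>r=1..n. Rcomp n c r j i r)"

definition chern_scal :: "nat \<Rightarrow> sconst \<Rightarrow> complex" where
  "chern_scal n c = (\<Sum>i=1..n. Ric1 n c i i)"

definition alt_scal :: "nat \<Rightarrow> sconst \<Rightarrow> complex" where
  "alt_scal n c = (\<Sum>i=1..n. Ric3 n c i i)"

end

theory Submission
  imports Defs
begin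



lemma Bn_mem[simp]: "(k, b) \<in> Bn n \<longleftrightarrow> 1 \<le> k \<and> k \<le> n"
  by (simp add: Bn_def)

lemma cb_cb[simp]: "cb (cb p) = p" by (simp add: cb_def)
lemma cb_pair[simp]: "cb (k, b) = (k, \<not> b)" by (simp add: cb_def)
lemma cb_Bn[simp]: "cb p \<in> Bn n \<longleftrightarrow> p \<in> Bn n"
  by (cases p) simp
lemma finite_Bn[simp]: "finite (Bn n)" by (simp add: Bn_def)

lemma sum_Bn: "(\<Sum>p\<in>Bn n. f p) = (\<Sum>k=1..n. f (k, False) + f (k, True))"
proof -
  have "(\<Sum>p\<in>Bn n. f p) = (\<Sum>k\<in>{1..n}. \<Sum>b\<in>UNIV. f (k, b))"
    unfolding Bn_def by (simp add: sum.cartesian_product)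
  also have "\<dots> = (\<Sum>k=1..n. f (k, False) + f (k, True))"
    by (simp add: UNIV_bool)
  finally show ?thesis .
qed

lemma gmet_eq: "gmet r s = (if r = cb s then 1 else 0)"
  by (cases r; cases s) (auto simp: gmet_def)

lemma cb_sym: "q = cb r \<longleftrightarrow> r = cb q" by (metis cb_cb)

lemma sum_gmet_right: assumes "s \<in> Bn n" shows "(\<Sum>r\<in>Bn n. f r * gmet r s) = f (cb s)"
proof -
  have "(\<Sum>r\<in>Bn n. f r * gmet r s) = (\<Sum>r\<in>Bn n. if r = cb s then f r else 0)"
    by (rule sum.cong) (auto simp: gmet_eq)
  also have "\<dots> = f (cb s)" using assms by simp
  finally show ?thesis .
qed

lemma sum_gmet_left: assumes "q \<in> Bn n" shows "(\<Sum>r\<in>Bn n. gmet q r * f r) = f (cb q)"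
proof -
  have "(\<Sum>r\<in>Bn n. gmet q r * f r) = (\<Sum>r\<in>Bn n. if r = cb q then f r else 0)"
    by (rule sum.cong) (auto simp: gmet_eq cb_sym)
  also have "\<dots> = f (cb q)" using assms by simp
  finally show ?thesis .
qed

definition G0 :: "nat \<Rightarrow> sconst \<Rightarrow> sconst" where
  "G0 n c p q r = (if p \<in> Bn n \<and> q \<in> Bn n \<and> r \<in> Bn n \<and> snd q = snd r then
      (if snd p = snd q then - c p (cb r) (cb q) else c p q r) else 0)"

lemma Jev_eq: "Jev p = Jev q \<longleftrightarrow> snd p = snd q"
  by (auto simp: Jev_def complex_eq_iff)

lemma is_chern_G0:
  assumes H: "hermitian_lie n c" shows "is_chern n c (G0 n c)"
proof -
  have anti: "\<And>p q r. p \<in> Bn n \<Longrightarrow> q \<in> Bn n \<Longrightarrow> r \<in> Bn n \<Longrightarrow> c p q r = - c q p r"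
    using H unfolding hermitian_lie_def by blast
  have cj: "\<And>p q r. p \<in> Bn n \<Longrightarrow> q \<in> Bn n \<Longrightarrow> r \<in> Bn n \<Longrightarrow> c (cb p) (cb q) (cb r) = cnj (c p q r)"
    using H unfolding hermitian_lie_def by blast
  show ?thesis unfolding is_chern_def
  proof (intro conjI ballI allI impI)
    fix p q r assume "\<not> (p \<in> Bn n \<and> q \<in> Bn n \<and> r \<in> Bn n)"
    then show "G0 n c p q r = 0" by (auto simp: G0_def)
  next
    fix p q r assume "p \<in> Bn n" "q \<in> Bn n" "r \<in> Bn n"
    note P = this
    obtain i x j y k z where pqr: "p = (i, x)" "q = (j, y)" "r = (k, z)" by (cases p; cases q; cases r)
    have c1: "c (cb p) (cb q) (cb r) = cnj (c p q r)" using cj[of p q r] P by simp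
    have c2: "c (cb p) r q = cnj (c p (cb r) (cb q))" using cj[of p "cb r" "cb q"] P by simp
    show "G0 n c (cb p) (cb q) (cb r) = cnj (G0 n c p q r)"
      using P c1 c2 unfolding pqr by (cases x; cases y; cases z) (simp_all add: G0_def)
  next
    fix p q r assume "p \<in> Bn n" "q \<in> Bn n" "r \<in> Bn n"
    show "Jev q * G0 n c p q r = Jev r * G0 n c p q r"
    proof (cases "snd q = snd r")
      case True then have "Jev q = Jev r" by (simp add: Jev_eq)
      then show ?thesis by simp
    next
      case False then have "G0 n c p q r = 0" by (simp add: G0_def)
      then show ?thesis by simp
    qed
  next
    fix p q s assume P: "p \<in> Bn n" "q \<in> Bn n" "s \<in> Bn n"
    obtain i x j y k z where pqr: "p = (i, x)" "q = (j, y)" "s = (k, z)" by (cases p; cases q; cases s)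
    have "G0 n c p q (cb s) + G0 n c p s (cb q) = 0"
      using P unfolding pqr by (cases x; cases y; cases z) (simp_all add: G0_def)
    then show "(\<Sum>r\<in>Bn n. G0 n c p q r * gmet r s) + (\<Sum>r\<in>Bn n. gmet q r * G0 n c p s r) = 0"
      using P by (simp add: sum_gmet_right sum_gmet_left)
  next
    fix i j r assume "i \<in> {1..n}" "j \<in> {1..n}" "r \<in> Bn n"
    note P = this
    then have m: "(i, False) \<in> Bn n" "(j, True) \<in> Bn n" by auto
    show "G0 n c (i, False) (j, True) r - G0 n c (j, True) (i, False) r - c (i, False) (j, True) r = 0"
    proof (cases "snd r")
      case True then show ?thesis using P m by (simp add: G0_def)
    next
      case False
      have "c (j, True) (i, False) r = - c (i, False) (j, True) r" using anti[of "(j,True)" "(i,False)" r] P m by simp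
      then show ?thesis using P m False by (simp add: G0_def)
    qed
  qed
qed

lemma chern_unique:
  assumes H: "hermitian_lie n c" and G: "is_chern n c G" shows "G = G0 n c"
proof -
  have anti: "\<And>p q r. p \<in> Bn n \<Longrightarrow> q \<in> Bn n \<Longrightarrow> r \<in> Bn n \<Longrightarrow> c p q r = - c q p r"
    using H unfolding hermitian_lie_def by blast
  have out: "\<And>p q r. \<not> (p \<in> Bn n \<and> q \<in> Bn n \<and> r \<in> Bn n) \<Longrightarrow> G p q r = 0"
    using G unfolding is_chern_def by blast
  have J: "\<And>p q r. p \<in> Bn n \<Longrightarrow> q \<in> Bn n \<Longrightarrow> r \<in> Bn n \<Longrightarrow> snd q \<noteq> snd r \<Longrightarrow> G p q r = 0"
  proof -
    fix p q r assume "p \<in> Bn n" "q \<in> Bn n" "r \<in> Bn n" "snd q \<noteq> snd r"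
    moreover have "Jev q * G p q r = Jev r * G p q r" using G calculation unfolding is_chern_def by blast
    moreover have "Jev q - Jev r \<noteq> 0" using calculation Jev_eq[of q r] by simp
    ultimately show "G p q r = 0"
      by (metis eq_iff_diff_eq_0 left_diff_distrib mult_eq_0_iff)
  qed
  have met: "\<And>p q s. p \<in> Bn n \<Longrightarrow> q \<in> Bn n \<Longrightarrow> s \<in> Bn n \<Longrightarrow> G p q (cb s) + G p s (cb q) = 0"
  proof -
    fix p q s assume P: "p \<in> Bn n" "q \<in> Bn n" "s \<in> Bn n"
    then have "(\<Sum>r\<in>Bn n. G p q r * gmet r s) + (\<Sum>r\<in>Bn n. gmet q r * G p s r) = 0"
      using G P unfolding is_chern_def by blast
    then show "G p q (cb s) + G p s (cb q) = 0" using P by (simp add: sum_gmet_right sum_gmet_left)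
  qed
  have tor: "\<And>i j r. i \<in> {1..n} \<Longrightarrow> j \<in> {1..n} \<Longrightarrow> r \<in> Bn n \<Longrightarrow>
      G (i, False) (j, True) r - G (j, True) (i, False) r - c (i, False) (j, True) r = 0"
    using G unfolding is_chern_def by blast
  have mixed: "G p q r = c p q r" if P: "p \<in> Bn n" "q \<in> Bn n" "r \<in> Bn n" "snd q = snd r" "snd p \<noteq> snd q" for p q r
  proof (cases p)
    case (Pair i bp) obtain j bq where q: "q = (j, bq)" by (cases q)
    obtain k br where r: "r = (k, br)" by (cases r)
    show ?thesis
    proof (cases bp)
      case True
      then have bq: "bq = False" "br = False" using P Pair q r by auto
      have "G (j, False) (i, True) r - G (i, True) (j, False) r - c (j, False) (i, True) r = 0"
        using tor[of j i r] P Pair q by auto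
      moreover have "G (j, False) (i, True) r = 0" using J[of "(j,False)" "(i,True)" r] P Pair q r bq by auto
      moreover have "c (j, False) (i, True) r = - c (i, True) (j, False) r" using anti[of "(j,False)" "(i,True)" r] P Pair q True bq by auto
      ultimately show ?thesis using Pair q True bq by simp
    next
      case False
      then have bq: "bq = True" "br = True" using P Pair q r by auto
      have "G (i, False) (j, True) r - G (j, True) (i, False) r - c (i, False) (j, True) r = 0"
        using tor[of i j r] P Pair q by auto
      moreover have "G (j, True) (i, False) r = 0" using J[of "(j,True)" "(i,False)" r] P Pair q r bq by auto
      ultimately show ?thesis using Pair q False bq by simp
    qed
  qed
  show ?thesis
  proof (intro ext)
    fix p q r
    show "G p q r = G0 n c p q r"
    proof (cases "p \<in> Bn n \<and> q \<in> Bn n \<and> r \<in> Bn n")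
      case False then show ?thesis using out by (auto simp: G0_def)
    next
      case True
      show ?thesis
      proof (cases "snd q = snd r")
        case False then show ?thesis using True J by (auto simp: G0_def)
      next
        case qr: True
        show ?thesis
        proof (cases "snd p = snd q")
          case False then show ?thesis using True qr mixed by (auto simp: G0_def)
        next
          case pq: True
          have "G p q (cb (cb r)) + G p (cb r) (cb q) = 0" using met[of p q "cb r"] True by simp
          moreover have "G p (cb r) (cb q) = c p (cb r) (cb q)"
            using mixed[of p "cb r" "cb q"] True qr pq by (cases r; cases q) auto
          ultimately show ?thesis using True qr pq by (simp add: G0_def eq_neg_iff_add_eq_0)
        qed
      qed
    qed
  qed
qed

lemma chern_eq: assumes H: "hermitian_lie n c" shows "chern n c = G0 n c"
  unfolding chern_def
proof (rule the_equality)
  show "is_chern n c (G0 n c)" by (rule is_chern_G0[OF H])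
next
  fix G assume "is_chern n c G" then show "G = G0 n c" by (rule chern_unique[OF H])
qed




lemma sum_delta1: "finite S \<Longrightarrow> (\<Sum>j\<in>S. f j * (if k = j then 1 else 0)) = (if k \<in> S then f k else (0::complex))"
proof -
  assume "finite S"
  have "(\<Sum>j\<in>S. f j * (if k = j then 1 else 0)) = (\<Sum>j\<in>S. if k = j then f j else 0)"
    by (rule sum.cong) auto
  then show ?thesis using \<open>finite S\<close> by simp
qed
lemma sum_delta2: "finite S \<Longrightarrow> (\<Sum>j\<in>S. f j * (if j = k then 1 else 0)) = (if k \<in> S then f k else (0::complex))"
proof -
  assume "finite S"
  have "(\<Sum>j\<in>S. f j * (if j = k then 1 else 0)) = (\<Sum>j\<in>S. if j = k then f j else 0)"
    by (rule sum.cong) auto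
  then show ?thesis using \<open>finite S\<close> by simp
qed

lemma self_neg: fixes x :: complex assumes "x = - x" shows "x = 0"
proof -
  have "2 * x = x + x" by (rule mult_2)
  also have "x + x = x + - x" by (rule arg_cong[where f="\<lambda>y. x + y"], rule assms)
  also have "x + - x = 0" by (rule add.right_inverse)
  finally have "2 * x = 0" .
  then show ?thesis by simp
qed

definition Dm :: "real \<Rightarrow> (nat \<Rightarrow> complex) \<Rightarrow> (nat \<Rightarrow> nat \<Rightarrow> complex) \<Rightarrow> nat \<Rightarrow> nat \<Rightarrow> complex" where
  "Dm lam v A k l = (if k = 1 then (if l = 1 then - of_real lam else - cnj (v l))
                     else (if l = 1 then 0 else - cnj (A l k)))"

definition Em :: "(nat \<Rightarrow> nat \<Rightarrow> complex) \<Rightarrow> nat \<Rightarrow> nat \<Rightarrow> complex" where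
  "Em A k l = (if k = 1 \<or> l = 1 then 0 else - cnj (A l k))"

locale adm =
  fixes n c lam v A
  assumes H: "hermitian_lie n c" and Adm: "admissible n c lam v A"
begin

lemma anti: "p \<in> Bn n \<Longrightarrow> q \<in> Bn n \<Longrightarrow> r \<in> Bn n \<Longrightarrow> c p q r = - c q p r"
  using H unfolding hermitian_lie_def by blast
lemma cj: "p \<in> Bn n \<Longrightarrow> q \<in> Bn n \<Longrightarrow> r \<in> Bn n \<Longrightarrow> c (cb p) (cb q) (cb r) = cnj (c p q r)"
  using H unfolding hermitian_lie_def by blast
lemma cj': "p \<in> Bn n \<Longrightarrow> q \<in> Bn n \<Longrightarrow> r \<in> Bn n \<Longrightarrow> c p q r = cnj (c (cb p) (cb q) (cb r))"
  using cj[of "cb p" "cb q" "cb r"] by simp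

lemma dform_phi: "1 \<le> l \<Longrightarrow> l \<le> n \<Longrightarrow> dform n c (phi l) p q = - c p q (l, False)"
proof -
  assume l: "1 \<le> l" "l \<le> n"
  have "(\<Sum>r\<in>Bn n. phi l r * c p q r) = (\<Sum>r\<in>Bn n. if r = (l, False) then c p q r else 0)"
    by (rule sum.cong) (auto simp: phi_def)
  also have "\<dots> = c p q (l, False)" using l by simp
  finally show ?thesis by (simp add: dform_def)
qed

lemma cF1: "p \<in> Bn n \<Longrightarrow> q \<in> Bn n \<Longrightarrow> c p q (1, False) = of_real lam * wedge (phi 1) (phibar 1) p q"
  using Adm dform_phi[of 1 p q] by (auto simp: admissible_def Bn_def)

lemma cF: "p \<in> Bn n \<Longrightarrow> q \<in> Bn n \<Longrightarrow> 2 \<le> l \<Longrightarrow> l \<le> n \<Longrightarrow>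
   c p q (l, False) = cnj (v l) * wedge (phi 1) (phibar 1) p q
      - (\<Sum>j=2..n. cnj (A l j) * wedge (\<lambda>r. phi 1 r + phibar 1 r) (phi j) p q)"
proof -
  assume a: "p \<in> Bn n" "q \<in> Bn n" "2 \<le> l" "l \<le> n"
  then have "dform n c (phi l) p q = - cnj (v l) * wedge (phi 1) (phibar 1) p q
            + (\<Sum>j=2..n. cnj (A l j) * wedge (\<lambda>r. phi 1 r + phibar 1 r) (phi j) p q)"
    using Adm by (auto simp: admissible_def)
  moreover have "dform n c (phi l) p q = - c p q (l, False)" using a by (intro dform_phi) auto
  ultimately show ?thesis by (simp add: algebra_simps)
qed

lemma Dlem: "1 \<le> k \<Longrightarrow> k \<le> n \<Longrightarrow> 1 \<le> l \<Longrightarrow> l \<le> n \<Longrightarrow> c (1, True) (k, False) (l, False) = Dm lam v A k l"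
proof -
  assume a: "1 \<le> k" "k \<le> n" "1 \<le> l" "l \<le> n"
  show ?thesis
  proof (cases "l = 1")
    case True then show ?thesis using a cF1[of "(1,True)" "(k,False)"]
      by (simp add: Dm_def wedge_def phi_def phibar_def)
  next
    case False
    then have "2 \<le> l" using a by simp
    then show ?thesis using a False cF[of "(1,True)" "(k,False)" l]
      by (simp add: Dm_def wedge_def phi_def phibar_def sum_delta1 sum_delta2)
  qed
qed

lemma Elem: "1 \<le> k \<Longrightarrow> k \<le> n \<Longrightarrow> 1 \<le> l \<Longrightarrow> l \<le> n \<Longrightarrow> c (1, False) (k, False) (l, False) = Em A k l"
proof -
  assume a: "1 \<le> k" "k \<le> n" "1 \<le> l" "l \<le> n"
  show ?thesis
  proof (cases "k = 1")
    case True
    have "c (1,False) (1,False) (l,False) = - c (1,False) (1,False) (l,False)"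
      using a by (intro anti) auto
    then have "c (1,False) (1,False) (l,False) = 0" by (rule self_neg)
    then show ?thesis using True by (simp add: Em_def)
  next
    case kn: False
    show ?thesis
    proof (cases "l = 1")
      case True then show ?thesis using a kn cF1[of "(1,False)" "(k,False)"]
        by (simp add: Em_def wedge_def phi_def phibar_def)
    next
      case False
      then have "2 \<le> l" using a by simp
      then show ?thesis using a False kn cF[of "(1,False)" "(k,False)" l]
        by (simp add: Em_def wedge_def phi_def phibar_def sum_delta1 sum_delta2)
    qed
  qed
qed

lemma Z2F: "p \<in> Bn n \<Longrightarrow> q \<in> Bn n \<Longrightarrow> fst p \<noteq> 1 \<Longrightarrow> c p q (1, False) = 0"
  using cF1 by (cases p) (simp add: wedge_def phi_def phibar_def)

lemma Z2T: "p \<in> Bn n \<Longrightarrow> q \<in> Bn n \<Longrightarrow> fst p \<noteq> 1 \<Longrightarrow> c p q (1, True) = 0"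
proof -
  assume a: "p \<in> Bn n" "q \<in> Bn n" "fst p \<noteq> 1"
  then have n1: "(1, True) \<in> Bn n" by (cases p) auto
  have "c p q (1, True) = cnj (c (cb p) (cb q) (1, False))"
    using cj'[of p q "(1,True)"] a n1 by simp
  also have "\<dots> = 0" using Z2F[of "cb p" "cb q"] a by (cases p) auto
  finally show ?thesis .
qed

lemma Z1: "a \<noteq> 1 \<Longrightarrow> (a, True) \<in> Bn n \<Longrightarrow> (j, False) \<in> Bn n \<Longrightarrow> (k, False) \<in> Bn n \<Longrightarrow>
   c (a, True) (j, False) (k, False) = 0"
proof -
  assume a: "a \<noteq> 1" "(a, True) \<in> Bn n" "(j, False) \<in> Bn n" "(k, False) \<in> Bn n"
  show ?thesis
  proof (cases "k = 1")
    case True then show ?thesis using a Z2F[of "(a,True)" "(j,False)"] by simp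
  next
    case False
    then show ?thesis using a cF[of "(a,True)" "(j,False)" k]
      by (simp add: wedge_def phi_def phibar_def)
  qed
qed

lemma Zmix: "p \<in> Bn n \<Longrightarrow> q \<in> Bn n \<Longrightarrow> r \<in> Bn n \<Longrightarrow> fst p \<noteq> 1 \<Longrightarrow> snd p \<noteq> snd q \<Longrightarrow> snd q = snd r \<Longrightarrow> c p q r = 0"
proof -
  assume a: "p \<in> Bn n" "q \<in> Bn n" "r \<in> Bn n" "fst p \<noteq> 1" "snd p \<noteq> snd q" "snd q = snd r"
  obtain i bp j bq k br where pqr: "p = (i, bp)" "q = (j, bq)" "r = (k, br)" by (cases p; cases q; cases r)
  show ?thesis
  proof (cases bp)
    case True then show ?thesis using a pqr Z1[of i j k] by auto
  next
    case False
    then have "c p q r = cnj (c (i, True) (j, False) (k, False))" using a pqr cj'[of p q r] by auto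
    then show ?thesis using Z1[of i j k] a pqr False by auto
  qed
qed

lemma GF1: "fst p \<noteq> 1 \<Longrightarrow> G0 n c p q r = 0"
proof -
  assume f: "fst p \<noteq> 1"
  show ?thesis
  proof (cases "p \<in> Bn n \<and> q \<in> Bn n \<and> r \<in> Bn n \<and> snd q = snd r")
    case False then show ?thesis by (auto simp: G0_def)
  next
    case True
    show ?thesis
    proof (cases "snd p = snd q")
      case True2: True
      have "c p (cb r) (cb q) = 0" using True True2 f
        by (intro Zmix) (cases r; cases q; auto)+
      then show ?thesis using True True2 by (simp add: G0_def)
    next
      case False
      then show ?thesis using True f Zmix[of p q r] by (simp add: G0_def)
    qed
  qed
qed

end



lemma sum_cb: "(\<Sum>t\<in>Bn n. f (cb t)) = (\<Sum>t\<in>Bn n. f t)"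
proof -
  have "inj_on cb (Bn n)" by (metis cb_cb inj_on_inverseI)
  moreover have "cb ` Bn n = Bn n"
  proof
    show "cb ` Bn n \<subseteq> Bn n" by auto
    show "Bn n \<subseteq> cb ` Bn n"
    proof
      fix x assume "x \<in> Bn n"
      then have "cb x \<in> Bn n" by simp
      then show "x \<in> cb ` Bn n" using image_eqI[of x cb "cb x"] by simp
    qed
  qed
  ultimately show ?thesis using sum.reindex[of cb "Bn n" f] by (simp add: comp_def)
qed

context adm begin

lemma G0_cj: "G0 n c (cb p) (cb q) (cb r) = cnj (G0 n c p q r)"
proof (cases "p \<in> Bn n \<and> q \<in> Bn n \<and> r \<in> Bn n")
  case True then show ?thesis using is_chern_G0[OF H] unfolding is_chern_def by blast
next
  case False then show ?thesis by (auto simp: G0_def)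
qed

lemma curv_eq: "curv n c p q s r =
   (\<Sum>t\<in>Bn n. G0 n c q s t * G0 n c p t r - G0 n c p s t * G0 n c q t r - c p q t * G0 n c t s r)"
  by (simp add: curv_def chern_eq[OF H] Let_def)

lemma curv_anti: "p \<in> Bn n \<Longrightarrow> q \<in> Bn n \<Longrightarrow> curv n c p q s r = - curv n c q p s r"
  unfolding curv_eq sum_negf[symmetric]
  by (rule sum.cong) (auto simp: anti[of p q] algebra_simps)

lemma curv_fst: "p \<in> Bn n \<Longrightarrow> q \<in> Bn n \<Longrightarrow> fst p \<noteq> 1 \<Longrightarrow> curv n c p q s r = 0"
  unfolding curv_eq
proof (rule sum.neutral, rule ballI)
  fix t assume p: "p \<in> Bn n" "q \<in> Bn n" "fst p \<noteq> 1" and t: "t \<in> Bn n"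
  have "c p q t * G0 n c t s r = 0"
  proof (cases "fst t = 1")
    case True
    then obtain b where tb: "t = (1, b)" by (cases t) auto
    show ?thesis using Z2F[OF p] Z2T[OF p] tb by (cases b) auto
  next
    case False then show ?thesis using GF1 by simp
  qed
  then show "G0 n c q s t * G0 n c p t r - G0 n c p s t * G0 n c q t r - c p q t * G0 n c t s r = 0"
    using GF1[OF p(3)] by simp
qed

lemma curv_snd: "snd s \<noteq> snd r \<Longrightarrow> curv n c p q s r = 0"
  unfolding curv_eq
  by (rule sum.neutral) (auto simp: G0_def)

lemma curv_cj: "p \<in> Bn n \<Longrightarrow> q \<in> Bn n \<Longrightarrow> curv n c (cb p) (cb q) (cb s) (cb r) = cnj (curv n c p q s r)"
proof -
  assume pq: "p \<in> Bn n" "q \<in> Bn n"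
  have "curv n c (cb p) (cb q) (cb s) (cb r) =
    (\<Sum>t\<in>Bn n. G0 n c (cb q) (cb s) (cb t) * G0 n c (cb p) (cb t) (cb r) - G0 n c (cb p) (cb s) (cb t) * G0 n c (cb q) (cb t) (cb r) - c (cb p) (cb q) (cb t) * G0 n c (cb t) (cb s) (cb r))"
    unfolding curv_eq by (rule sum_cb[symmetric])
  also have "\<dots> = (\<Sum>t\<in>Bn n. cnj (G0 n c q s t * G0 n c p t r - G0 n c p s t * G0 n c q t r - c p q t * G0 n c t s r))"
    by (rule sum.cong) (auto simp: G0_cj cj pq)
  also have "\<dots> = cnj (curv n c p q s r)" unfolding curv_eq by simp
  finally show ?thesis .
qed

definition Kf :: "nat \<Rightarrow> nat \<Rightarrow> complex" where
  "Kf k l = (\<Sum>m=1..n. cnj (Dm lam v A m k) * Dm lam v A m l - Dm lam v A k m * cnj (Dm lam v A l m))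
      + of_real lam * (cnj (Dm lam v A l k) + Dm lam v A k l)"

lemma curv_K: "1 \<le> k \<Longrightarrow> k \<le> n \<Longrightarrow> 1 \<le> l \<Longrightarrow> l \<le> n \<Longrightarrow> curv n c (1, False) (1, True) (k, False) (l, False) = Kf k l"
proof -
  assume a: "1 \<le> k" "k \<le> n" "1 \<le> l" "l \<le> n"
  have n1: "1 \<le> n" using a by simp
  have c11: "c (1, False) (1, True) (1, False) = of_real lam"
    using anti[of "(1,False)" "(1,True)" "(1,False)"] Dlem[of 1 1] n1 by (simp add: Dm_def)
  have c11b: "c (1, False) (1, True) (1, True) = - of_real lam"
    using cj'[of "(1,False)" "(1,True)" "(1,True)"] Dlem[of 1 1] n1 by (simp add: Dm_def)
  have GN: "G0 n c (1, True) (x, False) (y, False) = Dm lam v A x y" if "1 \<le> x" "x \<le> n" "1 \<le> y" "y \<le> n" for x y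
    using that n1 Dlem[of x y] by (simp add: G0_def)
  have GM: "G0 n c (1, False) (x, False) (y, False) = - cnj (Dm lam v A y x)" if "1 \<le> x" "x \<le> n" "1 \<le> y" "y \<le> n" for x y
    using that n1 Dlem[of y x] cj'[of "(1,False)" "(y,True)" "(x,True)"] by (simp add: G0_def)
  have pt: "(\<lambda>t. G0 n c (1, True) (k, False) t * G0 n c (1, False) t (l, False) - G0 n c (1, False) (k, False) t * G0 n c (1, True) t (l, False) - c (1, False) (1, True) t * G0 n c t (k, False) (l, False)) (m, False)
     + (\<lambda>t. G0 n c (1, True) (k, False) t * G0 n c (1, False) t (l, False) - G0 n c (1, False) (k, False) t * G0 n c (1, True) t (l, False) - c (1, False) (1, True) t * G0 n c t (k, False) (l, False)) (m, True)
     = (cnj (Dm lam v A m k) * Dm lam v A m l - Dm lam v A k m * cnj (Dm lam v A l m))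
       + (if m = 1 then of_real lam * (cnj (Dm lam v A l k) + Dm lam v A k l) else 0)"
    if m: "1 \<le> m" "m \<le> n" for m
  proof (cases "m = 1")
    case True
    then show ?thesis using m a GN GM c11 c11b by (simp add: G0_def algebra_simps)
  next
    case False
    then have "G0 n c (m, False) (k, False) (l, False) = 0" "G0 n c (m, True) (k, False) (l, False) = 0"
      using GF1 by auto
    then show ?thesis using m a GN GM False by (simp add: G0_def algebra_simps)
  qed
  have "curv n c (1, False) (1, True) (k, False) (l, False) =
     (\<Sum>m=1..n. (cnj (Dm lam v A m k) * Dm lam v A m l - Dm lam v A k m * cnj (Dm lam v A l m))
       + (if m = 1 then of_real lam * (cnj (Dm lam v A l k) + Dm lam v A k l) else 0))"
    unfolding curv_eq sum_Bn by (rule sum.cong) (use pt in auto)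
  also have "\<dots> = Kf k l" using n1 by (simp add: sum.distrib Kf_def)
  finally show ?thesis .
qed

end



lemma sum_split1: fixes n :: nat shows "1 \<le> n \<Longrightarrow> (\<Sum>m=1..n. f m) = f 1 + (\<Sum>m=2..n. (f m :: complex))"
  using sum.atLeast_Suc_atMost[of 1 n f] by (simp add: numeral_2_eq_2)

context adm begin

lemma Dm_col1: "1 \<le> m \<Longrightarrow> Dm lam v A m 1 = (if m = 1 then - of_real lam else 0)"
  by (simp add: Dm_def)

lemma curv_K': "Suc 0 \<le> k \<Longrightarrow> k \<le> n \<Longrightarrow> Suc 0 \<le> l \<Longrightarrow> l \<le> n \<Longrightarrow>
    curv n c (Suc 0, False) (Suc 0, True) (k, False) (l, False) = Kf k l"
  using curv_K by simp

lemma Rcomp_eq: "1 \<le> l \<Longrightarrow> l \<le> n \<Longrightarrow> Rcomp n c i j k l = curv n c (i, False) (j, True) (k, False) (l, False)"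
  unfolding Rcomp_def by (subst sum_gmet_right) auto

lemma curv_ij_zero: "1 \<le> i \<Longrightarrow> i \<le> n \<Longrightarrow> 1 \<le> j \<Longrightarrow> j \<le> n \<Longrightarrow> \<not> (i = 1 \<and> j = 1) \<Longrightarrow>
    curv n c (i, False) (j, True) s r = 0"
proof -
  assume a: "1 \<le> i" "i \<le> n" "1 \<le> j" "j \<le> n" "\<not> (i = 1 \<and> j = 1)"
  show ?thesis
  proof (cases "i = 1")
    case False then show ?thesis using a by (intro curv_fst) auto
  next
    case True
    then have "j \<noteq> 1" using a by simp
    then have "curv n c (j, True) (i, False) s r = 0" using a by (intro curv_fst) auto
    then show ?thesis using a curv_anti[of "(i,False)" "(j,True)" s r] by simp
  qed
qed

lemma Ric1_eq: "1 \<le> i \<Longrightarrow> i \<le> n \<Longrightarrow> 1 \<le> j \<Longrightarrow> j \<le> n \<Longrightarrow>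
   Ric1 n c i j = (if i = 1 \<and> j = 1 then (\<Sum>r=1..n. Kf r r) else 0)"
proof -
  assume a: "1 \<le> i" "i \<le> n" "1 \<le> j" "j \<le> n"
  have "Ric1 n c i j = (\<Sum>r=1..n. curv n c (i, False) (j, True) (r, False) (r, False))"
    unfolding Ric1_def by (rule sum.cong) (auto simp: Rcomp_eq)
  also have "\<dots> = (if i = 1 \<and> j = 1 then (\<Sum>r=1..n. Kf r r) else 0)"
  proof (cases "i = 1 \<and> j = 1")
    case True
    have "(\<Sum>r=1..n. curv n c (1, False) (1, True) (r, False) (r, False)) = (\<Sum>r=1..n. Kf r r)"
      by (rule sum.cong) (auto simp: curv_K curv_K')
    then show ?thesis using True by simp
  next
    case False
    have "(\<Sum>r=1..n. curv n c (i, False) (j, True) (r, False) (r, False)) = 0"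
      using a False by (intro sum.neutral ballI curv_ij_zero) auto
    then show ?thesis by (rule trans[OF _ if_not_P[OF False, symmetric]])
  qed
  finally show ?thesis .
qed

lemma Ric2_eq: "1 \<le> i \<Longrightarrow> i \<le> n \<Longrightarrow> 1 \<le> j \<Longrightarrow> j \<le> n \<Longrightarrow> Ric2 n c i j = Kf i j"
proof -
  assume a: "1 \<le> i" "i \<le> n" "1 \<le> j" "j \<le> n"
  have "Ric2 n c i j = (\<Sum>r=1..n. if r = 1 then Kf i j else 0)"
    unfolding Ric2_def
  proof (rule sum.cong)
    fix r assume r: "r \<in> {1..n}"
    show "Rcomp n c r r i j = (if r = 1 then Kf i j else 0)"
      using a r curv_ij_zero[of r r] curv_K[of i j] curv_K'[of i j] by (simp add: Rcomp_eq)
  qed simp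
  also have "\<dots> = Kf i j" using a by simp
  finally show ?thesis .
qed

lemma Ric3_eq: "1 \<le> i \<Longrightarrow> i \<le> n \<Longrightarrow> 1 \<le> j \<Longrightarrow> j \<le> n \<Longrightarrow> Ric3 n c i j = (if j = 1 then Kf i 1 else 0)"
proof -
  assume a: "1 \<le> i" "i \<le> n" "1 \<le> j" "j \<le> n"
  have "Ric3 n c i j = (\<Sum>r=1..n. if r = 1 then (if j = 1 then Kf i 1 else 0) else 0)"
    unfolding Ric3_def
  proof (rule sum.cong)
    fix r assume r: "r \<in> {1..n}"
    show "Rcomp n c r j i r = (if r = 1 then (if j = 1 then Kf i 1 else 0) else 0)"
    proof (cases "r = 1 \<and> j = 1")
      case True then show ?thesis using a r curv_K[of i 1] by (simp add: Rcomp_eq)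
    next
      case False
      have "Rcomp n c r j i r = curv n c (r, False) (j, True) (i, False) (r, False)" using r by (simp add: Rcomp_eq)
      also have "\<dots> = 0" using a r False by (intro curv_ij_zero) auto
      finally show ?thesis using False by auto
    qed
  qed simp
  also have "\<dots> = (if j = 1 then Kf i 1 else 0)" using a by simp
  finally show ?thesis .
qed

lemma curv_all: "(\<forall>p\<in>Bn n. \<forall>q\<in>Bn n. \<forall>s\<in>Bn n. \<forall>r\<in>Bn n. curv n c p q s r = 0) \<longleftrightarrow>
   (\<forall>k\<in>{1..n}. \<forall>l\<in>{1..n}. Kf k l = 0)"
proof
  assume h: "\<forall>p\<in>Bn n. \<forall>q\<in>Bn n. \<forall>s\<in>Bn n. \<forall>r\<in>Bn n. curv n c p q s r = 0"
  show "\<forall>k\<in>{1..n}. \<forall>l\<in>{1..n}. Kf k l = 0"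
  proof (intro ballI)
    fix k l assume "k \<in> {1..n}" "l \<in> {1..n}"
    then show "Kf k l = 0" using h curv_K[of k l] by force
  qed
next
  assume h: "\<forall>k\<in>{1..n}. \<forall>l\<in>{1..n}. Kf k l = 0"
  have K0: "curv n c (1, False) (1, True) (k, False) (l, False) = 0" if "1 \<le> k" "k \<le> n" "1 \<le> l" "l \<le> n" for k l
    using that h curv_K by simp
  show "\<forall>p\<in>Bn n. \<forall>q\<in>Bn n. \<forall>s\<in>Bn n. \<forall>r\<in>Bn n. curv n c p q s r = 0"
  proof (intro ballI)
    fix p q s r assume P: "p \<in> Bn n" "q \<in> Bn n" "s \<in> Bn n" "r \<in> Bn n"
    obtain i bp j bq k bs l br where pqr: "p = (i, bp)" "q = (j, bq)" "s = (k, bs)" "r = (l, br)"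
      by (cases p; cases q; cases s; cases r)
    show "curv n c p q s r = 0"
    proof (cases "i = 1")
      case False then show ?thesis using P pqr by (intro curv_fst) auto
    next
      case i1: True
      show ?thesis
      proof (cases "j = 1")
        case False
        then have "curv n c q p s r = 0" using P pqr by (intro curv_fst) auto
        then show ?thesis using curv_anti[of p q s r] P by simp
      next
        case j1: True
        show ?thesis
        proof (cases "bs = br")
          case False then show ?thesis using pqr by (intro curv_snd) auto
        next
          case sr: True
          show ?thesis
          proof (cases "bp = bq")
            case True
            then have "p = q" using pqr i1 j1 by simp
            then have "curv n c p q s r = - curv n c p q s r" using curv_anti[of p p s r] P by simp
            then show ?thesis by (rule self_neg)
          next
            case pq: False
            have kl: "1 \<le> k" "k \<le> n" "1 \<le> l" "l \<le> n" using P pqr by auto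
            have A1: "curv n c (1, False) (1, True) s r = 0"
            proof (cases bs)
              case False then show ?thesis using K0[OF kl] pqr sr by simp
            next
              case True
              have "curv n c (1, False) (1, True) s r = cnj (curv n c (1, True) (1, False) (k, False) (l, False))"
                using curv_cj[of "(1,True)" "(1,False)" "(k,False)" "(l,False)"] P pqr True sr i1 by simp
              also have "\<dots> = cnj (- curv n c (1, False) (1, True) (k, False) (l, False))"
                using curv_anti[of "(1,True)" "(1,False)" "(k,False)" "(l,False)"] P pqr i1 by simp
              finally show ?thesis using K0[OF kl] by simp
            qed
            show ?thesis
            proof (cases bp)
              case False then show ?thesis using A1 pqr i1 j1 pq by simp
            next
              case True
              then show ?thesis using A1 pqr i1 j1 pq curv_anti[of p q s r] P by simp
            qed
          qed
        qed
      qed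
    qed
  qed
qed

end



context adm begin

lemma U_lemma: assumes um: "unimodular n c" and n1: "1 \<le> n"
  shows "of_real lam + (\<Sum>k=2..n. A k k + cnj (A k k)) = 0"
proof -
  define x where "x = (\<lambda>p::idx. if p = (1,False) \<or> p = (1,True) then (1::complex) else 0)"
  have rv: "realvec n x" unfolding realvec_def
  proof
    fix p :: idx assume "p \<in> Bn n"
    obtain k b where "p = (k, b)" by (cases p)
    then show "x (cb p) = cnj (x p)" by (cases b) (auto simp: x_def)
  qed
  then have t0: "tr_ad n c x = 0" using um unfolding unimodular_def by blast
  have inner: "(\<Sum>p\<in>Bn n. \<Sum>p'\<in>Bn n. x p * basisv q p' * c p p' q) = c (1,False) q q + c (1,True) q q"
    if q: "q \<in> Bn n" for q
  proof -
    have "(\<Sum>p\<in>Bn n. \<Sum>p'\<in>Bn n. x p * basisv q p' * c p p' q) = (\<Sum>p\<in>Bn n. x p * c p q q)"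
    proof (rule sum.cong[OF refl])
      fix p assume "p \<in> Bn n"
      have "(\<Sum>p'\<in>Bn n. x p * basisv q p' * c p p' q) = (\<Sum>p'\<in>Bn n. if p' = q then x p * c p q q else 0)"
        by (rule sum.cong) (auto simp: basisv_def)
      also have "\<dots> = x p * c p q q" using q by simp
      finally show "(\<Sum>p'\<in>Bn n. x p * basisv q p' * c p p' q) = x p * c p q q" .
    qed
    also have "\<dots> = (\<Sum>k=1..n. x (k,False) * c (k,False) q q + x (k,True) * c (k,True) q q)"
      by (rule sum_Bn)
    also have "\<dots> = (\<Sum>k=1..n. if k = 1 then c (1,False) q q + c (1,True) q q else 0)"
      by (rule sum.cong) (auto simp: x_def)
    also have "\<dots> = c (1,False) q q + c (1,True) q q" using n1 by simp
    finally show ?thesis .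
  qed
  have "tr_ad n c x = (\<Sum>q\<in>Bn n. c (1,False) q q + c (1,True) q q)"
    unfolding tr_ad_def bracket_def by (rule sum.cong) (simp_all add: inner)
  also have "\<dots> = (\<Sum>k=1..n. (c (1,False) (k,False) (k,False) + c (1,True) (k,False) (k,False))
                 + (c (1,False) (k,True) (k,True) + c (1,True) (k,True) (k,True)))"
    by (rule sum_Bn)
  also have "\<dots> = (\<Sum>k=1..n. Em A k k + Dm lam v A k k + cnj (Dm lam v A k k) + cnj (Em A k k))"
  proof (rule sum.cong[OF refl])
    fix k assume k: "k \<in> {1..n}"
    have a1: "c (1,False) (k,True) (k,True) = cnj (c (1,True) (k,False) (k,False))"
      using cj'[of "(1,False)" "(k,True)" "(k,True)"] k n1 by simp
    have a2: "c (1,True) (k,True) (k,True) = cnj (c (1,False) (k,False) (k,False))"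
      using cj'[of "(1,True)" "(k,True)" "(k,True)"] k n1 by simp
    show "(c (1,False) (k,False) (k,False) + c (1,True) (k,False) (k,False))
                 + (c (1,False) (k,True) (k,True) + c (1,True) (k,True) (k,True)) =
          Em A k k + Dm lam v A k k + cnj (Dm lam v A k k) + cnj (Em A k k)"
      using a1 a2 k Elem[of k k] Dlem[of k k] by simp
  qed
  also have "\<dots> = - 2 * of_real lam + (\<Sum>k=2..n. - 2 * (A k k + cnj (A k k)))"
  proof -
    have "(\<Sum>k=2..n. Em A k k + Dm lam v A k k + cnj (Dm lam v A k k) + cnj (Em A k k))
        = (\<Sum>k=2..n. - 2 * (A k k + cnj (A k k)))"
      by (rule sum.cong) (auto simp: Em_def Dm_def)
    then show ?thesis unfolding sum_split1[OF n1] by (simp add: Em_def Dm_def)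
  qed
  finally have "- 2 * of_real lam + (\<Sum>k=2..n. - 2 * (A k k + cnj (A k k))) = 0" using t0 by simp
  moreover have "(\<Sum>k=2..n. - 2 * (A k k + cnj (A k k))) = - 2 * (\<Sum>k=2..n. A k k + cnj (A k k))"
    by (rule sum_distrib_left[symmetric])
  ultimately have "- 2 * (of_real lam + (\<Sum>k=2..n. A k k + cnj (A k k))) = 0"
    by (simp only: distrib_left)
  moreover have gen: "\<And>X::complex. - 2 * X = 0 \<Longrightarrow> X = 0" by simp
  ultimately show ?thesis by blast
qed

lemma trK: assumes n1: "1 \<le> n" and U: "of_real lam + (\<Sum>k=2..n. A k k + cnj (A k k)) = 0"
  shows "(\<Sum>r=1..n. Kf r r) = of_real (- (lam ^ 2))"
proof -
  define h where "h a b = cnj (Dm lam v A a b) * Dm lam v A a b" for a b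
  have "(\<Sum>r=1..n. Kf r r) = (\<Sum>r=1..n. (\<Sum>m=1..n. h m r) - (\<Sum>m=1..n. h r m)
        + of_real lam * (cnj (Dm lam v A r r) + Dm lam v A r r))"
    unfolding Kf_def h_def by (rule sum.cong) (simp_all add: sum_subtractf mult.commute)
  also have "\<dots> = (\<Sum>r=1..n. \<Sum>m=1..n. h m r) - (\<Sum>r=1..n. \<Sum>m=1..n. h r m)
        + of_real lam * (\<Sum>r=1..n. cnj (Dm lam v A r r) + Dm lam v A r r)"
    by (simp add: sum.distrib sum_subtractf sum_distrib_left distrib_left)
  also have "(\<Sum>r=1..n. \<Sum>m=1..n. h m r) = (\<Sum>r=1..n. \<Sum>m=1..n. h r m)" by (rule sum.swap)
  also have "(\<Sum>r=1..n. cnj (Dm lam v A r r) + Dm lam v A r r) = - of_real lam"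
  proof -
    have "(\<Sum>r=2..n. cnj (Dm lam v A r r) + Dm lam v A r r) = (\<Sum>r=2..n. - (A r r + cnj (A r r)))"
      by (rule sum.cong) (auto simp: Dm_def)
    also have "\<dots> = - (\<Sum>r=2..n. A r r + cnj (A r r))" by (rule sum_negf)
    also have "\<dots> = of_real lam"
    proof -
      have gen: "\<And>a X::complex. a + X = 0 \<Longrightarrow> - X = a" by algebra
      show ?thesis using gen[OF U] .
    qed
    finally show ?thesis unfolding sum_split1[OF n1] by (simp add: Dm_def)
  qed
  finally show ?thesis by (simp add: power2_eq_square)
qed

lemma K11: assumes n1: "1 \<le> n"
  shows "Kf 1 1 = of_real (- 2 * lam ^ 2 - (\<Sum>i=2..n. (cmod (v i))\<^sup>2))"
proof -
  have "(\<Sum>m=2..n. cnj (Dm lam v A m 1) * Dm lam v A m 1 - Dm lam v A 1 m * cnj (Dm lam v A 1 m))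
      = (\<Sum>m=2..n. - of_real ((cmod (v m))\<^sup>2))"
  proof (rule sum.cong[OF refl])
    fix m assume m: "m \<in> {2..n}"
    have e: "v m * cnj (v m) = (complex_of_real (cmod (v m)))\<^sup>2"
      using complex_norm_square[of "v m"] unfolding of_real_power by (rule sym)
    show "cnj (Dm lam v A m 1) * Dm lam v A m 1 - Dm lam v A 1 m * cnj (Dm lam v A 1 m) = - of_real ((cmod (v m))\<^sup>2)"
      using m e by (simp add: Dm_def mult.commute)
  qed
  then have "Kf 1 1 = - (\<Sum>m=2..n. of_real ((cmod (v m))\<^sup>2)) + of_real lam * (- 2 * of_real lam)"
    unfolding Kf_def sum_split1[OF n1] by (simp add: Dm_def sum_negf)
  then show ?thesis by (simp add: power2_eq_square)
qed

lemma Kzero: assumes l0: "lam = 0" and v0: "\<forall>i\<in>{2..n}. v i = 0"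
  and k: "1 \<le> k" "k \<le> n" and l: "1 \<le> l" "l \<le> n"
  shows "Kf k l = (if k = 1 \<or> l = 1 then 0 else (\<Sum>m=2..n. A k m * cnj (A l m) - cnj (A m k) * A m l))"
proof -
  have D1: "Dm lam v A 1 m = 0" if "1 \<le> m" "m \<le> n" for m using that l0 v0 by (auto simp: Dm_def)
  have D2: "Dm lam v A m 1 = 0" if "1 \<le> m" for m using that l0 by (auto simp: Dm_def)
  have "Kf k l = (\<Sum>m=2..n. cnj (Dm lam v A m k) * Dm lam v A m l - Dm lam v A k m * cnj (Dm lam v A l m))"
    unfolding Kf_def sum_split1[of n, OF order_trans[OF k]] using k l D1 D2 l0 by simp
  also have "\<dots> = (\<Sum>m=2..n. if k = 1 \<or> l = 1 then 0 else A k m * cnj (A l m) - cnj (A m k) * A m l)"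
  proof (rule sum.cong[OF refl])
    fix m assume m: "m \<in> {2..n}"
    show "cnj (Dm lam v A m k) * Dm lam v A m l - Dm lam v A k m * cnj (Dm lam v A l m) =
        (if k = 1 \<or> l = 1 then 0 else A k m * cnj (A l m) - cnj (A m k) * A m l)"
    proof (cases "k = 1")
      case True
      have a1: "Dm lam v A m k = 0" unfolding True by (rule D2) (use m in auto)
      have a2: "Dm lam v A k m = 0" unfolding True by (rule D1) (use m in auto)
      show ?thesis by (simp only: a1 a2) (simp add: True)
    next
      case kn: False
      show ?thesis
      proof (cases "l = 1")
        case True
        have a1: "Dm lam v A m l = 0" unfolding True by (rule D2) (use m in auto)
        have a2: "Dm lam v A l m = 0" unfolding True by (rule D1) (use m in auto)
        show ?thesis by (simp only: a1 a2) (simp add: True)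
      next
        case False
        then show ?thesis using kn m by (simp add: Dm_def)
      qed
    qed
  qed
  also have "\<dots> = (if k = 1 \<or> l = 1 then 0 else (\<Sum>m=2..n. A k m * cnj (A l m) - cnj (A m k) * A m l))"
    by simp
  finally show ?thesis .
qed

end



theorem lemma7:
  fixes n :: nat and c :: sconst and lam :: real
    and v :: "nat \<Rightarrow> complex" and A :: "nat \<Rightarrow> nat \<Rightarrow> complex"
  assumes "hermitian_lie n c"
    and "unimodular n c"
    and "almost_abelian n c"
    and "admissible n c lam v A"
  shows
    "(chern_scal n c = complex_of_real (- (lam ^ 2)) \<and> - (lam ^ 2) \<le> 0 \<and>
      (chern_scal n c = 0 \<longleftrightarrow> lam = 0) \<and>
      ((\<forall>i\<in>{1..n}. \<forall>j\<in>{1..n}. Ric1 n c i j = 0) \<longleftrightarrow> lam = 0))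
   \<and> (alt_scal n c = complex_of_real (- 2 * lam ^ 2 - (\<Sum>i=2..n. (cmod (v i))\<^sup>2)) \<and>
      - 2 * lam ^ 2 - (\<Sum>i=2..n. (cmod (v i))\<^sup>2) \<le> 0 \<and>
      (alt_scal n c = 0 \<longleftrightarrow> lam = 0 \<and> (\<forall>i\<in>{2..n}. v i = 0)) \<and>
      ((\<forall>i\<in>{1..n}. \<forall>j\<in>{1..n}. Ric3 n c i j = 0) \<longleftrightarrow> lam = 0 \<and> (\<forall>i\<in>{2..n}. v i = 0)))
   \<and> (((\<forall>i\<in>{1..n}. \<forall>j\<in>{1..n}. Ric2 n c i j = 0) \<longleftrightarrow>
         (\<forall>p\<in>Bn n. \<forall>q\<in>Bn n. \<forall>s\<in>Bn n. \<forall>r\<in>Bn n. curv n c p q s r = 0)) \<and>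
      ((\<forall>p\<in>Bn n. \<forall>q\<in>Bn n. \<forall>s\<in>Bn n. \<forall>r\<in>Bn n. curv n c p q s r = 0) \<longleftrightarrow>
         lam = 0 \<and> (\<forall>i\<in>{2..n}. v i = 0) \<and>
         (\<forall>i\<in>{2..n}. \<forall>j\<in>{2..n}.
            (\<Sum>k=2..n. A i k * cnj (A j k) - cnj (A k i) * A k j) = 0)))"
proof -
  interpret adm n c lam v A using assms(1) assms(4) by unfold_locales
  have n1: "1 \<le> n"
  proof -
    obtain p where "p \<in> Bn n" using assms(3) unfolding almost_abelian_def by blast
    then show ?thesis by (cases p) auto
  qed
  have U: "of_real lam + (\<Sum>k=2..n. A k k + cnj (A k k)) = 0" using U_lemma assms(2) n1 by blast
  have tK: "(\<Sum>r=1..n. Kf r r) = of_real (- (lam ^ 2))" using trK[OF n1 U] .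
  define S where "S = (\<Sum>i=2..n. (cmod (v i))\<^sup>2)"
  have K1: "Kf 1 1 = of_real (- 2 * lam ^ 2 - S)" unfolding S_def by (rule K11[OF n1])
  have S0: "S \<ge> 0" unfolding S_def by (simp add: sum_nonneg)
  have Siff: "S = 0 \<longleftrightarrow> (\<forall>i\<in>{2..n}. v i = 0)"
    unfolding S_def by (subst sum_nonneg_eq_0_iff) auto
  have l2: "lam ^ 2 \<ge> 0" by simp
  have lam0: "lam ^ 2 = 0 \<longleftrightarrow> lam = 0" by simp
  have zero_iff: "- 2 * lam ^ 2 - S = 0 \<longleftrightarrow> lam = 0 \<and> S = 0"
  proof -
    have "- 2 * lam ^ 2 - S = 0 \<longleftrightarrow> lam ^ 2 = 0 \<and> S = 0" using S0 l2 by linarith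
    then show ?thesis using lam0 by simp
  qed
  have R1: "Ric1 n c i j = (if i = 1 \<and> j = 1 then (\<Sum>r=1..n. Kf r r) else 0)" if "i \<in> {1..n}" "j \<in> {1..n}" for i j
    using that Ric1_eq by auto
  have R2: "Ric2 n c i j = Kf i j" if "i \<in> {1..n}" "j \<in> {1..n}" for i j
    using that Ric2_eq by auto
  have R3: "Ric3 n c i j = (if j = 1 then Kf i 1 else 0)" if "i \<in> {1..n}" "j \<in> {1..n}" for i j
    using that Ric3_eq by auto
  have one: "(1::nat) \<in> {1..n}" using n1 by simp
  have cs: "chern_scal n c = of_real (- (lam ^ 2))"
  proof -
    have "chern_scal n c = (\<Sum>i=1..n. if i = 1 then (\<Sum>r=1..n. Kf r r) else 0)"
      unfolding chern_scal_def by (rule sum.cong) (simp_all add: R1)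
    also have "\<dots> = of_real (- (lam ^ 2))" using one tK by simp
    finally show ?thesis .
  qed
  have als: "alt_scal n c = of_real (- 2 * lam ^ 2 - S)"
  proof -
    have "alt_scal n c = (\<Sum>i=1..n. if i = 1 then Kf 1 1 else 0)"
      unfolding alt_scal_def by (rule sum.cong) (auto simp: R3)
    also have "\<dots> = of_real (- 2 * lam ^ 2 - S)" using one K1 by simp
    finally show ?thesis .
  qed
  have Kz: "Kf k l = (if k = 1 \<or> l = 1 then 0 else (\<Sum>m=2..n. A k m * cnj (A l m) - cnj (A m k) * A m l))"
    if "lam = 0" "\<forall>i\<in>{2..n}. v i = 0" "k \<in> {1..n}" "l \<in> {1..n}" for k l
    using Kzero[of k l] that by auto
  have P1: "(\<forall>i\<in>{1..n}. \<forall>j\<in>{1..n}. Ric1 n c i j = 0) \<longleftrightarrow> lam = 0"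
  proof
    assume "\<forall>i\<in>{1..n}. \<forall>j\<in>{1..n}. Ric1 n c i j = 0"
    then have "Ric1 n c 1 1 = 0" using one by blast
    then have "complex_of_real (- (lam ^ 2)) = 0" using R1[OF one one] tK by simp
    then show "lam = 0" by simp
  next
    assume "lam = 0"
    then show "\<forall>i\<in>{1..n}. \<forall>j\<in>{1..n}. Ric1 n c i j = 0" using R1 tK by simp
  qed
  have P3: "(\<forall>i\<in>{1..n}. \<forall>j\<in>{1..n}. Ric3 n c i j = 0) \<longleftrightarrow> lam = 0 \<and> (\<forall>i\<in>{2..n}. v i = 0)"
  proof
    assume "\<forall>i\<in>{1..n}. \<forall>j\<in>{1..n}. Ric3 n c i j = 0"
    then have "Ric3 n c 1 1 = 0" using one by blast
    then have "complex_of_real (- 2 * lam ^ 2 - S) = 0" using R3[OF one one] K1 by simp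
    then have "- 2 * lam ^ 2 - S = 0" by (simp only: of_real_eq_0_iff)
    then show "lam = 0 \<and> (\<forall>i\<in>{2..n}. v i = 0)" using zero_iff Siff by blast
  next
    assume h: "lam = 0 \<and> (\<forall>i\<in>{2..n}. v i = 0)"
    show "\<forall>i\<in>{1..n}. \<forall>j\<in>{1..n}. Ric3 n c i j = 0"
    proof (intro ballI)
      fix i j assume ij: "i \<in> {1..n}" "j \<in> {1..n}"
      show "Ric3 n c i j = 0" using R3[OF ij] Kz[of i 1] h ij one by simp
    qed
  qed
  have PK: "(\<forall>k\<in>{1..n}. \<forall>l\<in>{1..n}. Kf k l = 0) \<longleftrightarrow>
         lam = 0 \<and> (\<forall>i\<in>{2..n}. v i = 0) \<and>
         (\<forall>i\<in>{2..n}. \<forall>j\<in>{2..n}. (\<Sum>k=2..n. A i k * cnj (A j k) - cnj (A k i) * A k j) = 0)"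
  proof
    assume h: "\<forall>k\<in>{1..n}. \<forall>l\<in>{1..n}. Kf k l = 0"
    then have "complex_of_real (- 2 * lam ^ 2 - S) = 0" using one K1 by auto
    then have "- 2 * lam ^ 2 - S = 0" by (simp only: of_real_eq_0_iff)
    then have lv: "lam = 0 \<and> (\<forall>i\<in>{2..n}. v i = 0)" using zero_iff Siff by blast
    have "\<forall>i\<in>{2..n}. \<forall>j\<in>{2..n}. (\<Sum>k=2..n. A i k * cnj (A j k) - cnj (A k i) * A k j) = 0"
    proof (intro ballI)
      fix i j assume ij: "i \<in> {2..n}" "j \<in> {2..n}"
      then have ij1: "i \<in> {1..n}" "j \<in> {1..n}" "i \<noteq> 1" "j \<noteq> 1" by auto
      show "(\<Sum>k=2..n. A i k * cnj (A j k) - cnj (A k i) * A k j) = 0"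
        using Kz[OF _ _ ij1(1,2)] lv h ij1 by auto
    qed
    then show "lam = 0 \<and> (\<forall>i\<in>{2..n}. v i = 0) \<and>
         (\<forall>i\<in>{2..n}. \<forall>j\<in>{2..n}. (\<Sum>k=2..n. A i k * cnj (A j k) - cnj (A k i) * A k j) = 0)"
      using lv by blast
  next
    assume h: "lam = 0 \<and> (\<forall>i\<in>{2..n}. v i = 0) \<and>
         (\<forall>i\<in>{2..n}. \<forall>j\<in>{2..n}. (\<Sum>k=2..n. A i k * cnj (A j k) - cnj (A k i) * A k j) = 0)"
    show "\<forall>k\<in>{1..n}. \<forall>l\<in>{1..n}. Kf k l = 0"
    proof (intro ballI)
      fix k l assume kl: "k \<in> {1..n}" "l \<in> {1..n}"
      show "Kf k l = 0"
      proof (cases "k = 1 \<or> l = 1")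
        case True then show ?thesis using Kz[OF _ _ kl] h by simp
      next
        case False
        then have "k \<in> {2..n}" "l \<in> {2..n}" using kl by auto
        then show ?thesis using Kz[OF _ _ kl] h False by simp
      qed
    qed
  qed
  have P2: "(\<forall>i\<in>{1..n}. \<forall>j\<in>{1..n}. Ric2 n c i j = 0) \<longleftrightarrow> (\<forall>k\<in>{1..n}. \<forall>l\<in>{1..n}. Kf k l = 0)"
  proof
    assume h: "\<forall>i\<in>{1..n}. \<forall>j\<in>{1..n}. Ric2 n c i j = 0"
    show "\<forall>k\<in>{1..n}. \<forall>l\<in>{1..n}. Kf k l = 0"
    proof (intro ballI)
      fix k l assume kl: "k \<in> {1..n}" "l \<in> {1..n}"
      have "Ric2 n c k l = 0" using h kl by blast
      then show "Kf k l = 0" using R2[OF kl] by simp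
    qed
  next
    assume h: "\<forall>k\<in>{1..n}. \<forall>l\<in>{1..n}. Kf k l = 0"
    show "\<forall>i\<in>{1..n}. \<forall>j\<in>{1..n}. Ric2 n c i j = 0"
    proof (intro ballI)
      fix k l assume kl: "k \<in> {1..n}" "l \<in> {1..n}"
      have "Kf k l = 0" using h kl by blast
      then show "Ric2 n c k l = 0" using R2[OF kl] by simp
    qed
  qed
  have A1a: "chern_scal n c = 0 \<longleftrightarrow> lam = 0" using cs by simp
  have A1b: "- (lam ^ 2) \<le> 0" by simp
  have A2a: "alt_scal n c = 0 \<longleftrightarrow> lam = 0 \<and> (\<forall>i\<in>{2..n}. v i = 0)"
  proof -
    have "alt_scal n c = 0 \<longleftrightarrow> - 2 * lam ^ 2 - S = 0" unfolding als by (rule of_real_eq_0_iff)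
    then show ?thesis using zero_iff Siff by blast
  qed
  have A2b: "- 2 * lam ^ 2 - S \<le> 0" using S0 l2 by linarith
  have A3a: "(\<forall>i\<in>{1..n}. \<forall>j\<in>{1..n}. Ric2 n c i j = 0) \<longleftrightarrow>
         (\<forall>p\<in>Bn n. \<forall>q\<in>Bn n. \<forall>s\<in>Bn n. \<forall>r\<in>Bn n. curv n c p q s r = 0)"
    using P2 curv_all by blast
  have A3b: "(\<forall>p\<in>Bn n. \<forall>q\<in>Bn n. \<forall>s\<in>Bn n. \<forall>r\<in>Bn n. curv n c p q s r = 0) \<longleftrightarrow>
         lam = 0 \<and> (\<forall>i\<in>{2..n}. v i = 0) \<and>
         (\<forall>i\<in>{2..n}. \<forall>j\<in>{2..n}.
            (\<Sum>k=2..n. A i k * cnj (A j k) - cnj (A k i) * A k j) = 0)"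
    using curv_all PK by blast
  show ?thesis unfolding S_def[symmetric]
    using cs A1a A1b P1 als A2b A2a P3 A3a A3b by blast
qed



end
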